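(* Let $A$ be a subalgebra of the matrix metabelian Lie algebra $M^0_{I,\Lambda}$. Then $\mathrm{Fit}(A)$ (which is abelian) is a torsion-free module over the polynomial ring $k[x_d:d\in D]$, where the module structure is defined via a family $\{e_d:d\in D\}\subseteq A$ whose images form a basis of $A/\mathrm{Fit}(A)$ by $b\cdot x_d=b\circ e_d$.
   Context: For sets $I,\Lambda$ and a field $k$, let $R=k[x_\alpha:\alpha\in\Lambda]$ and $T$ the free $R$-module with basis $\{u_i:i\in I\}$. $M_{I,\Lambda}$ is the set of pairs $(f,u)$, $f\in R$, $u\in T$, with componentwise linear operations and product $(f,u)\circ(g,v)=(0,ug-vf)$; $M^0_{I,\Lambda}$ is its subalgebra of pairs $(f,u)$ with $f$ a $k$-linear combination of the variables $x_\alpha$ (possibly $0$). $\mathrm{Fit}(A)$ is the ideal of $A$ generated by all elements lying in nilpotent ideals of $A$. For an abelian ideal $J\supseteq A^2$ of a metabelian Lie algebra, the module action $b\cdot x_d=b\circ e_d$ extends multiplicatively and linearly to a well-defined module structure over the commutative polynomial ring. *)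

theory Defs
  imports Main "HOL-Library.Poly_Mapping" "HOL-Library.Product_Plus"
begin

type_synonym ('v, 'k) mpoly = "('v \<Rightarrow>\<^sub>0 nat) \<Rightarrow>\<^sub>0 'k"

text \<open>Elements of M_{I,Lambda}: pairs (f,u), f in R = k[x_a : a in Lambda],
  u in the free R-module T with basis u_i (i in I), represented as I =>0 R.\<close>
type_synonym ('a, 'i, 'k) melt = "('a, 'k) mpoly \<times> ('i \<Rightarrow>\<^sub>0 ('a, 'k) mpoly)"

definition var :: "'v \<Rightarrow> ('v, 'k::comm_ring_1) mpoly" where
  "var v = Poly_Mapping.single (Poly_Mapping.single v 1) 1"

definition tscale :: "('i \<Rightarrow>\<^sub>0 ('a, 'k::comm_ring_1) mpoly) \<Rightarrow> ('a, 'k) mpoly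
    \<Rightarrow> ('i \<Rightarrow>\<^sub>0 ('a, 'k) mpoly)" where
  "tscale u g = Poly_Mapping.map (\<lambda>r. r * g) u"

definition mprod :: "('a, 'i, 'k::comm_ring_1) melt \<Rightarrow> ('a, 'i, 'k) melt \<Rightarrow> ('a, 'i, 'k) melt"
  (infixl "\<circ>\<^sub>M" 70) where
  "x \<circ>\<^sub>M y = (0, tscale (snd x) (fst y) - tscale (snd y) (fst x))"

definition kscale :: "'k::comm_ring_1 \<Rightarrow> ('a, 'i, 'k) melt \<Rightarrow> ('a, 'i, 'k) melt" where
  "kscale c x = (Poly_Mapping.map (\<lambda>r. c * r) (fst x),
                 Poly_Mapping.map (Poly_Mapping.map (\<lambda>r. c * r)) (snd x))"

definition M0 :: "('a, 'i, 'k::comm_ring_1) melt set" where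
  "M0 = {x. \<forall>m \<in> Poly_Mapping.keys (fst x). \<exists>a. m = Poly_Mapping.single a 1}"

definition ksubspace :: "('a, 'i, 'k::comm_ring_1) melt set \<Rightarrow> bool" where
  "ksubspace V \<longleftrightarrow> 0 \<in> V \<and> (\<forall>x\<in>V. \<forall>y\<in>V. x + y \<in> V) \<and> (\<forall>c. \<forall>x\<in>V. kscale c x \<in> V)"

definition kspan :: "('a, 'i, 'k::comm_ring_1) melt set \<Rightarrow> ('a, 'i, 'k) melt set" where
  "kspan S = \<Inter>{V. ksubspace V \<and> S \<subseteq> V}"

definition subalgebra :: "('a, 'i, 'k::comm_ring_1) melt set \<Rightarrow> ('a, 'i, 'k) melt set \<Rightarrow> bool" where
  "subalgebra A B \<longleftrightarrow> A \<subseteq> B \<and> ksubspace A \<and> (\<forall>x\<in>A. \<forall>y\<in>A. x \<circ>\<^sub>M y \<in> A)"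

definition lie_ideal :: "('a, 'i, 'k::comm_ring_1) melt set \<Rightarrow> ('a, 'i, 'k) melt set \<Rightarrow> bool" where
  "lie_ideal J A \<longleftrightarrow> J \<subseteq> A \<and> ksubspace J \<and>
     (\<forall>a\<in>A. \<forall>j\<in>J. a \<circ>\<^sub>M j \<in> J \<and> j \<circ>\<^sub>M a \<in> J)"

text \<open>Lower central series J^1 = J, J^{n+1} = span [J^n, J] (indexed from 0).\<close>
fun lcs :: "('a, 'i, 'k::comm_ring_1) melt set \<Rightarrow> nat \<Rightarrow> ('a, 'i, 'k) melt set" where
  "lcs J 0 = J"
| "lcs J (Suc n) = kspan {x \<circ>\<^sub>M y | x y. x \<in> lcs J n \<and> y \<in> J}"

definition nilpotent_set :: "('a, 'i, 'k::comm_ring_1) melt set \<Rightarrow> bool" where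
  "nilpotent_set J \<longleftrightarrow> (\<exists>n. lcs J n = {0})"

definition Fit :: "('a, 'i, 'k::comm_ring_1) melt set \<Rightarrow> ('a, 'i, 'k) melt set" where
  "Fit A = \<Inter>{J. lie_ideal J A \<and> \<Union>{N. lie_ideal N A \<and> nilpotent_set N} \<subseteq> J}"

text \<open>A list containing each d exactly (Poly_Mapping.lookup m d) times (order irrelevant by the
  well-definedness of the module structure).\<close>
definition mon_list :: "('d \<Rightarrow>\<^sub>0 nat) \<Rightarrow> 'd list" where
  "mon_list m = (SOME xs. \<forall>d. count_list xs d = Poly_Mapping.lookup m d)"

definition mon_act :: "('d \<Rightarrow> ('a, 'i, 'k::comm_ring_1) melt) \<Rightarrow> ('a, 'i, 'k) melt
    \<Rightarrow> ('d \<Rightarrow>\<^sub>0 nat) \<Rightarrow> ('a, 'i, 'k) melt" where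
  "mon_act e b m = fold (\<lambda>d c. c \<circ>\<^sub>M e d) (mon_list m) b"

definition poly_act :: "('d \<Rightarrow> ('a, 'i, 'k::comm_ring_1) melt) \<Rightarrow> ('a, 'i, 'k) melt
    \<Rightarrow> ('d, 'k) mpoly \<Rightarrow> ('a, 'i, 'k) melt" where
  "poly_act e b p = (\<Sum>m\<in>Poly_Mapping.keys p. kscale (Poly_Mapping.lookup p m) (mon_act e b m))"

definition lincomb :: "('d \<Rightarrow> ('a, 'i, 'k::comm_ring_1) melt) \<Rightarrow> ('d \<Rightarrow>\<^sub>0 'k) \<Rightarrow> ('a, 'i, 'k) melt" where
  "lincomb e c = (\<Sum>d\<in>Poly_Mapping.keys c. kscale (Poly_Mapping.lookup c d) (e d))"

end

theory Submission
  imports Defs "HOL.Vector_Spaces"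
begin

definition CC :: "'k \<Rightarrow> ('v, 'k::comm_ring_1) mpoly" where
  "CC c = Poly_Mapping.single 0 c"

definition mono :: "('a \<Rightarrow> ('b, 'k::comm_ring_1) mpoly) \<Rightarrow> ('a \<Rightarrow>\<^sub>0 nat) \<Rightarrow> ('b, 'k) mpoly" where
  "mono f m = (\<Prod>a\<in>Poly_Mapping.keys m. f a ^ Poly_Mapping.lookup m a)"

definition subst :: "('a \<Rightarrow> ('b, 'k::comm_ring_1) mpoly) \<Rightarrow> ('a, 'k) mpoly \<Rightarrow> ('b, 'k) mpoly" where
  "subst f q = (\<Sum>m\<in>Poly_Mapping.keys q. CC (Poly_Mapping.lookup q m) * mono f m)"

lemma repr: "q = (\<Sum>k\<in>Poly_Mapping.keys q. Poly_Mapping.single k (Poly_Mapping.lookup q k))"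
proof (rule poly_mapping_eqI)
  fix x
  show "Poly_Mapping.lookup q x = Poly_Mapping.lookup (\<Sum>k\<in>Poly_Mapping.keys q. Poly_Mapping.single k (Poly_Mapping.lookup q k)) x"
    by (auto simp: lookup_sum lookup_single when_def in_keys_iff)
qed

lemma CC_0[simp]: "CC 0 = 0" by (simp add: CC_def)
lemma CC_1[simp]: "CC 1 = 1" by (simp add: CC_def)
lemma CC_add: "CC (a + b) = CC a + CC b" by (simp add: CC_def single_add)
lemma CC_mult: "CC (a * b) = CC a * CC b" by (simp add: CC_def mult_single)
lemma CC_single: "CC c * Poly_Mapping.single m 1 = Poly_Mapping.single m c"
  by (simp add: CC_def mult_single)

lemma mono_superset:
  assumes "finite T" "Poly_Mapping.keys m \<subseteq> T"
  shows "mono f m = (\<Prod>a\<in>T. f a ^ Poly_Mapping.lookup m a)"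
  unfolding mono_def
  by (rule prod.mono_neutral_left) (use assms in \<open>auto simp: in_keys_iff\<close>)

lemma mono_0[simp]: "mono f 0 = 1" by (simp add: mono_def)

lemma mono_add: "mono f (m1 + m2) = mono f m1 * mono f m2"
proof -
  let ?T = "Poly_Mapping.keys m1 \<union> Poly_Mapping.keys m2"
  have "mono f (m1 + m2) = (\<Prod>a\<in>?T. f a ^ Poly_Mapping.lookup (m1 + m2) a)"
    by (rule mono_superset) (use keys_add[of m1 m2] in auto)
  also have "\<dots> = (\<Prod>a\<in>?T. f a ^ Poly_Mapping.lookup m1 a * f a ^ Poly_Mapping.lookup m2 a)"
    by (simp add: lookup_add power_add)
  also have "\<dots> = mono f m1 * mono f m2"
    by (simp add: prod.distrib mono_superset[of ?T])
  finally show ?thesis .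
qed

lemma subst_superset:
  assumes "finite T" "Poly_Mapping.keys q \<subseteq> T"
  shows "subst f q = (\<Sum>m\<in>T. CC (Poly_Mapping.lookup q m) * mono f m)"
  unfolding subst_def
  by (rule sum.mono_neutral_left) (use assms in \<open>auto simp: in_keys_iff\<close>)

lemma subst_0[simp]: "subst f 0 = 0" by (simp add: subst_def)

lemma subst_add: "subst f (p + q) = subst f p + subst f q"
proof -
  let ?T = "Poly_Mapping.keys p \<union> Poly_Mapping.keys q"
  have k: "Poly_Mapping.keys (p + q) \<subseteq> ?T" by (rule keys_add)
  show ?thesis
    by (simp add: subst_superset[of ?T] k lookup_add CC_add distrib_right sum.distrib)
qed

lemma subst_sum: "subst f (sum F T) = (\<Sum>x\<in>T. subst f (F x))"
  by (induction T rule: infinite_finite_induct) (auto simp: subst_add)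

lemma subst_single: "subst f (Poly_Mapping.single m c) = CC c * mono f m"
  by (simp add: subst_def)

lemma subst_mult: "subst f (p * q) = subst f p * subst f q"
proof -
  have "p * q = (\<Sum>m\<in>Poly_Mapping.keys p. Poly_Mapping.single m (Poly_Mapping.lookup p m)) *
                (\<Sum>n\<in>Poly_Mapping.keys q. Poly_Mapping.single n (Poly_Mapping.lookup q n))"
    using repr[of p] repr[of q] by simp
  also have "\<dots> = (\<Sum>m\<in>Poly_Mapping.keys p. \<Sum>n\<in>Poly_Mapping.keys q.
       Poly_Mapping.single (m + n) (Poly_Mapping.lookup p m * Poly_Mapping.lookup q n))"
    by (simp add: sum_product mult_single)
  finally have "subst f (p * q) = (\<Sum>m\<in>Poly_Mapping.keys p. \<Sum>n\<in>Poly_Mapping.keys q.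
       CC (Poly_Mapping.lookup p m) * mono f m * (CC (Poly_Mapping.lookup q n) * mono f n))"
    by (simp add: subst_sum subst_single CC_mult mono_add algebra_simps)
  also have "\<dots> = subst f p * subst f q"
    by (simp add: subst_def sum_product)
  finally show ?thesis .
qed

lemma subst_CC[simp]: "subst f (CC c) = CC c"
  by (simp add: CC_def subst_single[unfolded CC_def])

lemma subst_1[simp]: "subst f 1 = 1"
  using subst_CC[of f 1] by simp

lemma subst_power: "subst f (q ^ n) = subst f q ^ n"
  by (induction n) (auto simp: subst_mult)

lemma subst_prod: "subst f (prod F T) = (\<Prod>x\<in>T. subst f (F x))"
  by (induction T rule: infinite_finite_induct) (auto simp: subst_mult)

lemma subst_mono: "subst h (mono f m) = mono (\<lambda>a. subst h (f a)) m"
  by (simp add: mono_def subst_prod subst_power)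

lemma subst_compose: "subst h (subst f q) = subst (\<lambda>a. subst h (f a)) q"
proof -
  have "subst h (subst f q) = subst h (\<Sum>m\<in>Poly_Mapping.keys q. CC (Poly_Mapping.lookup q m) * mono f m)"
    by (simp add: subst_def[of f])
  also have "\<dots> = subst (\<lambda>a. subst h (f a)) q"
    by (simp add: subst_sum subst_mult subst_mono subst_def[of "\<lambda>a. subst h (f a)"])
  finally show ?thesis .
qed

lemma subst_cong:
  assumes "\<And>a m. m \<in> Poly_Mapping.keys q \<Longrightarrow> a \<in> Poly_Mapping.keys m \<Longrightarrow> f a = g a"
  shows "subst f q = subst g q"
  unfolding subst_def mono_def using assms
  by (intro sum.cong refl arg_cong2[where f="(*)"] prod.cong) auto

lemma single_power: "Poly_Mapping.single (Poly_Mapping.single a (1::nat)) (1::'k::comm_ring_1) ^ n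
   = Poly_Mapping.single (Poly_Mapping.single a n) 1"
  by (induction n) (auto simp: mult_single single_add[symmetric] mult.commute)

lemma prod_single: "(\<Prod>x\<in>T. Poly_Mapping.single (h x) (1::'k::comm_ring_1)) = Poly_Mapping.single (sum h T) 1"
  by (induction T rule: infinite_finite_induct) (auto simp: mult_single)

lemma mono_var: "mono var m = Poly_Mapping.single m 1"
proof -
  have "mono var m = (\<Prod>a\<in>Poly_Mapping.keys m. Poly_Mapping.single (Poly_Mapping.single a (Poly_Mapping.lookup m a)) 1)"
    unfolding mono_def var_def single_power ..
  also have "\<dots> = Poly_Mapping.single m 1"
    by (simp add: prod_single repr[of m, symmetric])
  finally show ?thesis .
qed

lemma subst_var: "subst var q = q"
  by (simp add: subst_def mono_var CC_single repr[of q, symmetric])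

lemma subst_of_var: "subst f (var a) = f a"
  by (simp add: var_def subst_single mono_def)


lemma no_zd:
  fixes p q :: "('a, 'k::field) mpoly"
  assumes pq: "p * q = 0"
  shows "p = 0 \<or> q = 0"
proof -
  define S where "S = (\<Union>m\<in>Poly_Mapping.keys p \<union> Poly_Mapping.keys q. Poly_Mapping.keys m)"
  have "finite S" unfolding S_def by auto
  then obtain \<rho> :: "'a \<Rightarrow> nat" and n where inj: "inj_on \<rho> S"
    using finite_imp_inj_to_nat_seg by blast
  define R :: "('a, 'k) mpoly \<Rightarrow> (nat, 'k) mpoly" where "R = subst (\<lambda>a. var (\<rho> a))"
  define Rb :: "(nat, 'k) mpoly \<Rightarrow> ('a, 'k) mpoly" where "Rb = subst (\<lambda>n. var (inv_into S \<rho> n))"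
  have bck: "Rb (R r) = r" if "Poly_Mapping.keys r \<subseteq> Poly_Mapping.keys p \<union> Poly_Mapping.keys q" for r
  proof -
    have "Rb (R r) = subst (\<lambda>a. var (inv_into S \<rho> (\<rho> a))) r"
      by (simp add: R_def Rb_def subst_compose subst_of_var)
    also have "\<dots> = subst var r"
    proof (rule subst_cong)
    fix a m assume "m \<in> Poly_Mapping.keys r" "a \<in> Poly_Mapping.keys m"
    then have "a \<in> S" using that unfolding S_def by blast
    then show "var (inv_into S \<rho> (\<rho> a)) = var a" using inj by simp
  qed
    finally show ?thesis by (simp add: subst_var)
  qed
  have "R p * R q = 0" using pq by (simp add: R_def subst_mult[symmetric])
  then have "R p = 0 \<or> R q = 0" by simp
  then show ?thesis
    using bck[of p] bck[of q] by (auto simp: Rb_def)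
qed

lemma no_zd_power:
  fixes f :: "('a, 'k::field) mpoly"
  assumes "f \<noteq> 0" shows "f ^ n \<noteq> 0"
  using assms by (induction n) (auto dest: no_zd)


definition sc :: "'k::field \<Rightarrow> ('v, 'k) mpoly \<Rightarrow> ('v, 'k) mpoly" where
  "sc c q = CC c * q"

lemma vs_sc: "vector_space (sc :: 'k::field \<Rightarrow> ('v, 'k) mpoly \<Rightarrow> ('v, 'k) mpoly)"
  by unfold_locales (simp_all add: sc_def CC_add CC_mult algebra_simps)

lemma vsp_sc: "vector_space_pair (sc :: 'k::field \<Rightarrow> ('v, 'k) mpoly \<Rightarrow> ('v, 'k) mpoly)
   (sc :: 'k::field \<Rightarrow> ('w, 'k) mpoly \<Rightarrow> ('w, 'k) mpoly)"
  unfolding vector_space_pair_def using vs_sc vs_sc by blast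

lemma alg_indep:
  fixes g :: "'d \<Rightarrow> ('a, 'k::field) mpoly" and p :: "('d, 'k) mpoly"
  assumes lin: "\<And>d m. m \<in> Poly_Mapping.keys (g d) \<Longrightarrow> \<exists>a. m = Poly_Mapping.single a 1"
    and ind: "\<And>T c. finite T \<Longrightarrow> (\<Sum>d\<in>T. sc (c d) (g d)) = 0 \<Longrightarrow> (\<forall>d\<in>T. c d = 0)"
    and p: "p \<noteq> 0"
  shows "subst g p \<noteq> 0"
proof -
  interpret vs: vector_space "sc :: 'k \<Rightarrow> ('a, 'k) mpoly \<Rightarrow> ('a, 'k) mpoly" by (rule vs_sc)
  interpret vsp: vector_space_pair "sc :: 'k \<Rightarrow> ('a, 'k) mpoly \<Rightarrow> ('a, 'k) mpoly"
     "sc :: 'k \<Rightarrow> ('d, 'k) mpoly \<Rightarrow> ('d, 'k) mpoly" by (rule vsp_sc)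
  have injg: "inj g"
  proof (rule injI, rule ccontr)
    fix d1 d2 assume eq: "g d1 = g d2" and ne: "d1 \<noteq> d2"
    have "(\<Sum>d\<in>{d1, d2}. sc (if d = d1 then 1 else -1) (g d)) = 0"
      using eq ne by (simp add: sc_def CC_def single_uminus)
    from ind[OF _ this] show False by simp
  qed
  have indep: "vs.independent (range g)"
    unfolding vs.independent_explicit_finite_subsets
  proof (intro allI impI ballI)
    fix S u v assume S: "S \<subseteq> range g" "finite S" and su: "(\<Sum>v\<in>S. sc (u v) v) = 0" and v: "v \<in> S"
    define T where "T = inv g ` S"
    have gi: "\<And>v. v \<in> S \<Longrightarrow> g (inv g v) = v" using S(1) by (auto intro: f_inv_into_f)
    have "(\<lambda>v. g (inv g v)) ` S = id ` S" by (rule image_cong[OF refl]) (simp add: gi)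
    then have gT: "g ` T = S" unfolding T_def image_image by simp
    have "inj_on g T" by (rule inj_on_subset[OF injg]) simp
    then have "(\<Sum>d\<in>T. sc (u (g d)) (g d)) = 0"
      using su gT sum.reindex[of g T "\<lambda>v. sc (u v) v"] by simp
    from ind[OF _ this] have "\<forall>d\<in>T. u (g d) = 0" using S(2) T_def by simp
    then show "u v = 0" using gT v by auto
  qed
  obtain \<psi> :: "('a, 'k) mpoly \<Rightarrow> ('d, 'k) mpoly" where
    linp: "Vector_Spaces.linear sc sc \<psi>" and psi: "\<forall>x\<in>range g. \<psi> x = var (inv g x)"
    using vsp.linear_independent_extend[OF indep, of "\<lambda>x. var (inv g x)"] by blast
  have psig: "\<psi> (g d) = var d" for d using psi injg by simp
  define \<Psi> where "\<Psi> = subst (\<lambda>a. \<psi> (var a))"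
  have Psig: "\<Psi> (g d) = var d" for d
  proof -
    have "\<Psi> (g d) = (\<Sum>m\<in>Poly_Mapping.keys (g d). \<psi> (Poly_Mapping.single m (Poly_Mapping.lookup (g d) m)))"
      unfolding \<Psi>_def subst_def
    proof (rule sum.cong[OF refl])
      fix m assume "m \<in> Poly_Mapping.keys (g d)"
      then obtain a where m: "m = Poly_Mapping.single a 1" using lin by blast
      have "CC (Poly_Mapping.lookup (g d) m) * mono (\<lambda>a. \<psi> (var a)) m
          = sc (Poly_Mapping.lookup (g d) m) (\<psi> (var a))"
        by (simp add: m mono_def sc_def)
      also have "\<dots> = \<psi> (sc (Poly_Mapping.lookup (g d) m) (var a))"
        using vsp.linear_scale[OF linp] by simp
      also have "\<dots> = \<psi> (Poly_Mapping.single m (Poly_Mapping.lookup (g d) m))"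
        by (simp add: sc_def var_def m CC_single)
      finally show "CC (Poly_Mapping.lookup (g d) m) * mono (\<lambda>a. \<psi> (var a)) m
          = \<psi> (Poly_Mapping.single m (Poly_Mapping.lookup (g d) m))" .
    qed
    also have "\<dots> = \<psi> (g d)"
      using vsp.linear_sum[OF linp] repr[of "g d"] by metis
    finally show ?thesis using psig by simp
  qed
  have "\<Psi> (subst g p) = p"
    by (simp add: \<Psi>_def subst_compose Psig[unfolded \<Psi>_def] subst_var)
  then show ?thesis using p by (auto simp: \<Psi>_def)
qed


lemma lookup_map0: "f 0 = 0 \<Longrightarrow> Poly_Mapping.lookup (Poly_Mapping.map f p) k = f (Poly_Mapping.lookup p k)"
  by (simp add: Poly_Mapping.map.rep_eq when_def)

lemma map_zero_pm[simp]: "Poly_Mapping.map f 0 = 0" by (simp add: map_eq_zero_iff)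

lemma lookup_tscale: "Poly_Mapping.lookup (tscale u r) i = Poly_Mapping.lookup u i * r"
  by (simp add: tscale_def lookup_map0)

lemma fst_kscale: "fst (kscale c x) = CC c * fst x"
  using mult_map_scale_conv_mult[of c "fst x"] by (simp add: kscale_def CC_def)

lemma lookup_snd_kscale: "Poly_Mapping.lookup (snd (kscale c x)) i = CC c * Poly_Mapping.lookup (snd x) i"
proof -
  show ?thesis unfolding kscale_def snd_conv
    by (subst lookup_map0) (use mult_map_scale_conv_mult[of c] in \<open>simp_all add: CC_def\<close>)
qed

lemma fst_mprod[simp]: "fst (x \<circ>\<^sub>M y) = 0" by (simp add: mprod_def)

lemma lookup_snd_mprod: "Poly_Mapping.lookup (snd (x \<circ>\<^sub>M y)) i
   = Poly_Mapping.lookup (snd x) i * fst y - Poly_Mapping.lookup (snd y) i * fst x"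
  by (simp add: mprod_def lookup_minus lookup_tscale)

lemma melt_eqI:
  fixes x y :: "('a, 'i, 'k::comm_ring_1) melt"
  assumes "fst x = fst y" "\<And>i. Poly_Mapping.lookup (snd x) i = Poly_Mapping.lookup (snd y) i"
  shows "x = y"
  using assms by (metis poly_mapping_eqI prod_eqI)

lemma melt_eq0I:
  fixes x :: "('a, 'i, 'k::comm_ring_1) melt"
  assumes "fst x = 0" "\<And>i. Poly_Mapping.lookup (snd x) i = 0"
  shows "x = 0"
  by (rule melt_eqI) (use assms in auto)

lemma kscale_0[simp]: "kscale c (0 :: ('a, 'i, 'k::comm_ring_1) melt) = 0"
  by (rule melt_eq0I) (simp_all add: fst_kscale lookup_snd_kscale)

lemma kscale_1[simp]: "kscale 1 (x :: ('a, 'i, 'k::comm_ring_1) melt) = x"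
  by (rule melt_eqI) (simp_all add: fst_kscale lookup_snd_kscale)

lemma kspan_sup: "S \<subseteq> kspan S" by (auto simp: kspan_def)

lemma ksubspace_0: "ksubspace ({0} :: ('a, 'i, 'k::comm_ring_1) melt set)"
  by (simp add: ksubspace_def)

lemma kspan_0: "kspan ({0} :: ('a, 'i, 'k::comm_ring_1) melt set) = {0}"
proof
  show "kspan {0} \<subseteq> ({0} :: ('a, 'i, 'k) melt set)" unfolding kspan_def using ksubspace_0 by blast
  show "({0} :: ('a, 'i, 'k) melt set) \<subseteq> kspan {0}" by (rule kspan_sup)
qed

lemma abelian_nilpotent:
  fixes N :: "('a, 'i, 'k::comm_ring_1) melt set"
  assumes "ksubspace N" "\<forall>x\<in>N. \<forall>y\<in>N. x \<circ>\<^sub>M y = 0"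
  shows "nilpotent_set N"
proof -
  have z: "0 \<in> N" using assms by (simp add: ksubspace_def)
  have "{x \<circ>\<^sub>M y | x y. x \<in> lcs N 0 \<and> y \<in> N} = {0}"
  proof
    show "{x \<circ>\<^sub>M y | x y. x \<in> lcs N 0 \<and> y \<in> N} \<subseteq> {0}" using assms by auto
    have "0 \<circ>\<^sub>M 0 = (0 :: ('a, 'i, 'k) melt)" by (rule melt_eq0I) (simp_all add: lookup_snd_mprod)
    show "{0} \<subseteq> {x \<circ>\<^sub>M y | x y. x \<in> lcs N 0 \<and> y \<in> N}"
      unfolding lcs.simps
    proof (rule subsetI)
      fix u :: "('a, 'i, 'k) melt" assume "u \<in> {0}"
      then have "u = 0 \<circ>\<^sub>M 0" using \<open>0 \<circ>\<^sub>M 0 = 0\<close> by simp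
      then show "u \<in> {x \<circ>\<^sub>M y | x y. x \<in> N \<and> y \<in> N}" using z by blast
    qed
  qed
  then have "lcs N 1 = {0}" by (simp add: kspan_0)
  then show ?thesis unfolding nilpotent_set_def by blast
qed

lemma Fit_sub:
  assumes "lie_ideal J A" "\<And>N. lie_ideal N A \<Longrightarrow> nilpotent_set N \<Longrightarrow> N \<subseteq> J"
  shows "Fit A \<subseteq> J"
  unfolding Fit_def using assms by blast

lemma Fit_sup:
  assumes "lie_ideal N A" "nilpotent_set N"
  shows "N \<subseteq> Fit A"
  unfolding Fit_def using assms by blast

lemma ksub_sum:
  assumes "ksubspace V" "\<And>x. x \<in> S \<Longrightarrow> F x \<in> V"
  shows "sum F S \<in> V"
  using assms by (induction S rule: infinite_finite_induct) (auto simp: ksubspace_def)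

lemma lincomb_single: "lincomb e (Poly_Mapping.single d (1::'k::comm_ring_1)) = e d"
  by (simp add: lincomb_def)

lemma prod_list_count:
  assumes "finite T" "set xs \<subseteq> T"
  shows "prod_list (map g xs) = (\<Prod>d\<in>T. (g d :: 'b::comm_monoid_mult) ^ count_list xs d)"
  using assms(2)
proof (induction xs)
  case Nil then show ?case by simp
next
  case (Cons x xs)
  have xT: "x \<in> T" using Cons.prems by simp
  have "(\<Prod>d\<in>T. g d ^ count_list (x # xs) d) = (\<Prod>d\<in>T. (if d = x then g d else 1) * g d ^ count_list xs d)"
    by (rule prod.cong) auto
  also have "\<dots> = g x * (\<Prod>d\<in>T. g d ^ count_list xs d)"
    using xT assms(1) by (simp add: prod.distrib prod.delta)
  finally show ?case using Cons by simp
qed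

lemma mon_list_count: "count_list (mon_list m) d = Poly_Mapping.lookup m d"
proof -
  have crep: "count_list (replicate n x) d = (if d = x then n else 0)" for n x and d :: 'a
    by (induction n) auto
  have ex: "\<exists>xs. \<forall>d. count_list xs d = (if d \<in> T then h d else 0)" if "finite T" for T and h :: "'a \<Rightarrow> nat"
    using that
  proof (induction T rule: finite_induct)
    case empty then show ?case by (auto intro: exI[of _ "[]"])
  next
    case (insert x T)
    then obtain xs where xs: "\<forall>d. count_list xs d = (if d \<in> T then h d else 0)" by blast
    show ?case
      by (rule exI[of _ "replicate (h x) x @ xs"]) (use xs insert in \<open>auto simp: crep\<close>)
  qed
  obtain xs where xs: "\<forall>d. count_list xs d = (if d \<in> Poly_Mapping.keys m then Poly_Mapping.lookup m d else 0)"
    using ex[of "Poly_Mapping.keys m" "Poly_Mapping.lookup m"] by auto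
  have "\<forall>d. count_list xs d = Poly_Mapping.lookup m d"
  proof
    fix d show "count_list xs d = Poly_Mapping.lookup m d"
      using xs[rule_format, of d] by (cases "Poly_Mapping.lookup m d = 0") (auto simp: in_keys_iff)
  qed
  then have "\<exists>xs. \<forall>d. count_list xs d = Poly_Mapping.lookup m d" by blast
  then show ?thesis unfolding mon_list_def by (rule someI_ex[where P="\<lambda>xs. \<forall>d. count_list xs d = Poly_Mapping.lookup m d", THEN spec])
qed

lemma prod_mon_list: "prod_list (map g (mon_list m)) = mono g m"
proof -
  have s: "set (mon_list m) = Poly_Mapping.keys m"
    using mon_list_count[of m] count_list_0_iff[of "mon_list m"] by (auto simp: in_keys_iff)
  show ?thesis
    by (simp add: prod_list_count[of "set (mon_list m)"] s mono_def mon_list_count)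
qed


theorem lemma3p1p2:
  fixes A :: "('a, 'i, 'k::field) melt set"
    and e :: "'d \<Rightarrow> ('a, 'i, 'k) melt"
  assumes sub: "subalgebra A M0"
    and eA: "\<forall>d. e d \<in> A"
    and span: "\<forall>a\<in>A. \<exists>c. a - lincomb e c \<in> Fit A"
    and indep: "\<forall>c. lincomb e c \<in> Fit A \<longrightarrow> c = 0"
  shows "(\<forall>x\<in>Fit A. \<forall>y\<in>Fit A. x \<circ>\<^sub>M y = 0) \<and>
         (\<forall>b\<in>Fit A. \<forall>p :: ('d, 'k) mpoly. p \<noteq> 0 \<longrightarrow> poly_act e b p = 0 \<longrightarrow> b = 0)"
proof -
  from sub have AM: "A \<subseteq> M0" and ksA: "ksubspace A" and clA: "\<forall>x\<in>A. \<forall>y\<in>A. x \<circ>\<^sub>M y \<in> A"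
    by (auto simp: subalgebra_def)
  have central: "\<forall>y\<in>A. x \<circ>\<^sub>M y = 0"
    if N: "lie_ideal N A" "nilpotent_set N" and x: "x \<in> N" "fst x \<noteq> 0" for N x
  proof
    fix y assume y: "y \<in> A"
    define z where "z = x \<circ>\<^sub>M y"
    have zN: "z \<in> N" using N x y by (simp add: lie_ideal_def z_def)
    define w where "w = snd z"
    define f where "f = fst x"
    have pow: "((0, tscale w (f ^ k)) :: ('a, 'i, 'k) melt) \<in> lcs N k" for k
    proof (induction k)
      case 0
      have "((0, tscale w (f ^ 0)) :: ('a, 'i, 'k) melt) = z"
        by (rule melt_eqI) (simp_all add: z_def w_def lookup_tscale)
      then show ?case using zN by simp
    next
      case (Suc k)
      have eq: "((0, tscale w (f ^ Suc k)) :: ('a, 'i, 'k) melt) = (0, tscale w (f ^ k)) \<circ>\<^sub>M x"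
        by (rule melt_eqI) (simp_all add: lookup_snd_mprod lookup_tscale f_def algebra_simps)
      have "(0, tscale w (f ^ k)) \<circ>\<^sub>M x \<in> {a \<circ>\<^sub>M b | a b. a \<in> lcs N k \<and> b \<in> N}"
        by (rule CollectI, rule exI[of _ "(0, tscale w (f ^ k))"], rule exI[of _ x]) (simp add: Suc.IH x(1))
      then show ?case unfolding eq lcs.simps by (rule subsetD[OF kspan_sup])
    qed
    obtain n where "lcs N n = {0}" using N(2) nilpotent_set_def by blast
    then have "((0, tscale w (f ^ n)) :: ('a, 'i, 'k) melt) = 0" using pow[of n] by simp
    then have tz: "tscale w (f ^ n) = 0" by (simp add: zero_prod_def)
    have fn: "f ^ n \<noteq> 0" using x(2) f_def no_zd_power by blast
    have wi: "Poly_Mapping.lookup w i = 0" for i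
    proof -
      have "Poly_Mapping.lookup w i * f ^ n = 0" using tz lookup_tscale[of w "f ^ n" i] by simp
      then show ?thesis using fn no_zd by blast
    qed
    show "x \<circ>\<^sub>M y = 0"
      by (rule melt_eq0I) (use wi in \<open>simp_all add: w_def z_def\<close>)
  qed
  show ?thesis
  proof (cases "\<exists>N x. lie_ideal N A \<and> nilpotent_set N \<and> x \<in> N \<and> fst x \<noteq> 0")
    case True
    then obtain N x where N: "lie_ideal N A" "nilpotent_set N" and x: "x \<in> N" "fst x \<noteq> 0" by blast
    have cx: "\<forall>y\<in>A. x \<circ>\<^sub>M y = 0" using central[OF N x] .
    have ab: "\<forall>y1\<in>A. \<forall>y2\<in>A. y1 \<circ>\<^sub>M y2 = 0"
    proof (intro ballI)
      fix y1 y2 assume y1: "y1 \<in> A" and y2: "y2 \<in> A"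
      show "y1 \<circ>\<^sub>M y2 = 0"
      proof (rule melt_eq0I)
        show "fst (y1 \<circ>\<^sub>M y2) = 0" by simp
        fix i
        define u where "u = Poly_Mapping.lookup (snd x) i"
        define v1 where "v1 = Poly_Mapping.lookup (snd y1) i"
        define v2 where "v2 = Poly_Mapping.lookup (snd y2) i"
        have h1: "u * fst y1 = v1 * fst x"
          using cx y1 lookup_snd_mprod[of x y1 i] by (simp add: u_def v1_def)
        have h2: "u * fst y2 = v2 * fst x"
          using cx y2 lookup_snd_mprod[of x y2 i] by (simp add: u_def v2_def)
        have "(v1 * fst y2 - v2 * fst y1) * fst x = fst y2 * (v1 * fst x) - fst y1 * (v2 * fst x)"
          by (simp add: algebra_simps)
        also have "\<dots> = fst y2 * (u * fst y1) - fst y1 * (u * fst y2)" using h1 h2 by simp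
        also have "\<dots> = 0" by (simp add: algebra_simps)
        finally have "(v1 * fst y2 - v2 * fst y1) * fst x = 0" .
        then have "v1 * fst y2 - v2 * fst y1 = 0" using no_zd x(2) by blast
        then show "Poly_Mapping.lookup (snd (y1 \<circ>\<^sub>M y2)) i = 0"
          by (simp add: lookup_snd_mprod v1_def v2_def)
      qed
    qed
    have "lie_ideal A A" using ksA clA by (simp add: lie_ideal_def)
    moreover have "nilpotent_set A" by (rule abelian_nilpotent[OF ksA ab])
    ultimately have "A \<subseteq> Fit A" by (rule Fit_sup)
    then have "lincomb e (Poly_Mapping.single (undefined::'d) (1::'k)) \<in> Fit A"
      using eA lincomb_single by (metis subsetD)
    then have "Poly_Mapping.single (undefined::'d) (1::'k) = 0" using indep by blast
    then show ?thesis by (metis lookup_single_eq one_neq_zero lookup_zero)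
  next
    case False
    define A0 where "A0 = {x\<in>A. fst x = 0}"
    have ksA0: "ksubspace A0"
      using ksA unfolding ksubspace_def A0_def by (auto simp: fst_kscale)
    have abA0: "\<forall>x\<in>A0. \<forall>y\<in>A0. x \<circ>\<^sub>M y = 0"
    proof (intro ballI)
      fix x y assume "x \<in> A0" "y \<in> A0"
      then show "x \<circ>\<^sub>M y = 0"
        by (intro melt_eq0I) (auto simp: A0_def lookup_snd_mprod)
    qed
    have idA0: "lie_ideal A0 A"
      unfolding lie_ideal_def using ksA0 clA by (auto simp: A0_def)
    have nilA0: "nilpotent_set A0" by (rule abelian_nilpotent[OF ksA0 abA0])
    have FA: "Fit A = A0"
    proof
      show "Fit A \<subseteq> A0"
      proof (rule Fit_sub[OF idA0])
        fix N assume NN: "lie_ideal N A" "nilpotent_set N"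
        show "N \<subseteq> A0"
        proof
          fix x assume "x \<in> N"
          moreover have "\<not> (lie_ideal N A \<and> nilpotent_set N \<and> x \<in> N \<and> fst x \<noteq> 0)" using False by blast
          ultimately have "x \<in> A" "fst x = 0" using NN by (auto simp: lie_ideal_def)
          then show "x \<in> A0" by (simp add: A0_def)
        qed
      qed
      show "A0 \<subseteq> Fit A" by (rule Fit_sup[OF idA0 nilA0])
    qed
    define g where "g = (\<lambda>d. fst (e d))"
    show ?thesis
    proof
      show "\<forall>x\<in>Fit A. \<forall>y\<in>Fit A. x \<circ>\<^sub>M y = 0" using abA0 FA by simp
      show "\<forall>b\<in>Fit A. \<forall>p :: ('d, 'k) mpoly. p \<noteq> 0 \<longrightarrow> poly_act e b p = 0 \<longrightarrow> b = 0"
      proof (intro ballI allI impI)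
        fix b and p :: "('d, 'k) mpoly"
        assume b: "b \<in> Fit A" and p: "p \<noteq> 0" and pa: "poly_act e b p = 0"
        have fb: "fst b = 0" using b FA by (simp add: A0_def)
        define w where "w = snd b"
        have fold: "fold (\<lambda>d c. c \<circ>\<^sub>M e d) xs ((0, tscale w r) :: ('a, 'i, 'k) melt)
            = (0, tscale w (r * prod_list (map g xs)))" for xs r
        proof (induction xs arbitrary: r)
          case Nil then show ?case by simp
        next
          case (Cons a xs)
          have "((0, tscale w r) :: ('a, 'i, 'k) melt) \<circ>\<^sub>M e a = (0, tscale w (r * g a))"
            by (rule melt_eqI) (simp_all add: lookup_snd_mprod lookup_tscale g_def algebra_simps)
          then show ?case using Cons[of "r * g a"] by (simp add: mult.assoc)
        qed
        have b0: "b = (0, tscale w 1)"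
          by (rule melt_eqI) (simp_all add: fb w_def lookup_tscale)
        have monact: "mon_act e b m = (0, tscale w (mono g m))" for m
          unfolding mon_act_def by (subst b0) (simp add: fold prod_mon_list)
        have lk: "Poly_Mapping.lookup (snd (poly_act e b p)) i = Poly_Mapping.lookup w i * subst g p" for i
          by (simp add: poly_act_def snd_sum lookup_sum lookup_snd_kscale monact lookup_tscale subst_def sum_distrib_left algebra_simps)
        have sg: "subst g p \<noteq> 0"
        proof (rule alg_indep[OF _ _ p])
          fix d m assume "m \<in> Poly_Mapping.keys (g d)"
          then show "\<exists>a. m = Poly_Mapping.single a 1"
            using eA AM unfolding g_def M0_def by blast
        next
          fix T and c :: "'d \<Rightarrow> 'k"
          assume T: "finite T" and s: "(\<Sum>d\<in>T. sc (c d) (g d)) = 0"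
          define cc where "cc = Abs_poly_mapping (\<lambda>d. if d \<in> T then c d else 0)"
          have fin: "finite {d. (if d \<in> T then c d else 0) \<noteq> 0}"
            by (rule finite_subset[OF _ T]) auto
          have lcc: "Poly_Mapping.lookup cc = (\<lambda>d. if d \<in> T then c d else 0)"
            unfolding cc_def using fin by simp
          have kT: "Poly_Mapping.keys cc \<subseteq> T" by (auto simp: in_keys_iff lcc split: if_splits)
          have inA: "lincomb e cc \<in> A"
            unfolding lincomb_def by (rule ksub_sum[OF ksA]) (use ksA eA in \<open>auto simp: ksubspace_def\<close>)
          have "fst (lincomb e cc) = (\<Sum>d\<in>Poly_Mapping.keys cc. CC (Poly_Mapping.lookup cc d) * g d)"
            by (simp add: lincomb_def fst_sum fst_kscale g_def)
          also have "\<dots> = (\<Sum>d\<in>T. CC (Poly_Mapping.lookup cc d) * g d)"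
            by (rule sum.mono_neutral_left[OF T kT]) (auto simp: in_keys_iff)
          also have "\<dots> = (\<Sum>d\<in>T. sc (c d) (g d))"
            by (rule sum.cong) (auto simp: lcc sc_def)
          finally have "fst (lincomb e cc) = 0" using s by simp
          then have "lincomb e cc \<in> Fit A" using inA FA by (simp add: A0_def)
          then have "cc = 0" using indep by blast
          then show "\<forall>d\<in>T. c d = 0" using lcc by (metis lookup_zero)
        qed
        have wi: "Poly_Mapping.lookup w i = 0" for i
        proof -
          have "Poly_Mapping.lookup w i * subst g p = 0" using lk[of i] pa by simp
          then show ?thesis using sg no_zd by blast
        qed
        show "b = 0"
          by (rule melt_eq0I) (use fb wi in \<open>simp_all add: w_def\<close>)
      qed
    qed
  qed
qed

end
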